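(* Let $1\le k<n$, let $w=(y_1,\dots,y_{k-r},\overline{z_r},\dots,\overline{z_1},v_1,\dots,v_{n-k})\in W^{OG(k,2n+1)}$ and $\lambda=\mathrm{Inv}(w)$. Then for $1\le i\le k$, \[\lambda^{(1)}_i=\begin{cases} n+1-k+|\{l: z_i<v_l\}| & \text{if } i\le r,\\ |\{l: y_{k+1-i}>v_l\}| & \text{if } i>r,\end{cases}\qquad \lambda^{(2)}_i=\begin{cases} |\{q: z_i<z_q\}|+|\{t: z_i<y_t\}| & \text{if } i\le r,\\ 0 & \text{if } i>r.\end{cases}\]
   Context: Root system $B_n$: positive roots $e_a\pm e_b$ ($a<b$), $e_a$. $W^{OG(k,2n+1)}$ is the set of signed permutations $w=(y_1,\dots,y_{k-r},\overline{z_r},\dots,\overline{z_1},v_1,\dots,v_{n-k})$ of $1,\dots,n$ (bars = negative entries) with $0\le r\le k$, $y_1<\dots<y_{k-r}$, $z_r>\dots>z_1$, $v_1<\dots<v_{n-k}$; so the entry in position $k+1-i$ is $\overline{z_i}$ if $i\le r$ and $y_{k+1-i}$ if $i>r$. $w$ acts by $e_a\mapsto\pm e_{|w(a)|}$ (minus if barred), and $\mathrm{Inv}(w)$ is the set of positive roots sent to negative roots. For a set $S$ of positive roots, $\lambda^{(1)}_i$ is the number of roots of $S$ among $e_{k+1-i}\pm e_b$ ($b>k$) and $e_{k+1-i}$, and $\lambda^{(2)}_i$ is the number of roots of $S$ of the form $e_a+e_{k+1-i}$ with $a<k+1-i$. *)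

theory Defs
  imports Main
begin

(* Vectors in Z^n are modelled as functions nat => int (coordinates 1..n). *)
definition evec :: "nat \<Rightarrow> nat \<Rightarrow> int" where
  "evec a = (\<lambda>j. if j = a then 1 else 0)"

definition vplus :: "(nat \<Rightarrow> int) \<Rightarrow> (nat \<Rightarrow> int) \<Rightarrow> nat \<Rightarrow> int" where
  "vplus u v = (\<lambda>j. u j + v j)"

definition vminus :: "(nat \<Rightarrow> int) \<Rightarrow> (nat \<Rightarrow> int) \<Rightarrow> nat \<Rightarrow> int" where
  "vminus u v = (\<lambda>j. u j - v j)"

definition vneg :: "(nat \<Rightarrow> int) \<Rightarrow> nat \<Rightarrow> int" where
  "vneg u = (\<lambda>j. - u j)"

definition pos_roots_B :: "nat \<Rightarrow> (nat \<Rightarrow> int) set" where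
  "pos_roots_B n =
     {vminus (evec a) (evec b) | a b. 1 \<le> a \<and> a < b \<and> b \<le> n}
   \<union> {vplus (evec a) (evec b) | a b. 1 \<le> a \<and> a < b \<and> b \<le> n}
   \<union> {evec a | a. 1 \<le> a \<and> a \<le> n}"

definition neg_roots_B :: "nat \<Rightarrow> (nat \<Rightarrow> int) set" where
  "neg_roots_B n = vneg ` pos_roots_B n"

(* A signed permutation w : {1..n} -> Z (w a = +-|w a|); it acts linearly by
   e_a |-> sgn(w a) e_{|w a|}. *)
definition signed_act :: "nat \<Rightarrow> (nat \<Rightarrow> int) \<Rightarrow> (nat \<Rightarrow> int) \<Rightarrow> nat \<Rightarrow> int" where
  "signed_act n w u = (\<lambda>j. \<Sum>a\<in>{1..n}. u a * (if nat \<bar>w a\<bar> = j then sgn (w a) else 0))"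

definition Inv_B :: "nat \<Rightarrow> (nat \<Rightarrow> int) \<Rightarrow> (nat \<Rightarrow> int) set" where
  "Inv_B n w = {\<alpha> \<in> pos_roots_B n. signed_act n w \<alpha> \<in> neg_roots_B n}"

(* the signed permutation (y_1..y_{k-r}, -z_r,..,-z_1, v_1..v_{n-k}) in one-line notation *)
definition og_word :: "nat \<Rightarrow> nat \<Rightarrow> (nat \<Rightarrow> nat) \<Rightarrow> (nat \<Rightarrow> nat) \<Rightarrow> (nat \<Rightarrow> nat) \<Rightarrow> nat \<Rightarrow> int" where
  "og_word k r y z v = (\<lambda>p. if p \<le> k - r then int (y p)
                             else if p \<le> k then - int (z (k + 1 - p))
                             else int (v (p - k)))"

definition lambda1 :: "nat \<Rightarrow> nat \<Rightarrow> (nat \<Rightarrow> int) set \<Rightarrow> nat \<Rightarrow> nat" where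
  "lambda1 n k S i = card {\<alpha> \<in> S.
      (\<exists>b. k < b \<and> b \<le> n \<and> (\<alpha> = vminus (evec (k+1-i)) (evec b) \<or> \<alpha> = vplus (evec (k+1-i)) (evec b)))
      \<or> \<alpha> = evec (k+1-i)}"

definition lambda2 :: "nat \<Rightarrow> (nat \<Rightarrow> int) set \<Rightarrow> nat \<Rightarrow> nat" where
  "lambda2 k S i = card {\<alpha> \<in> S. \<exists>a. 1 \<le> a \<and> a < k+1-i \<and> \<alpha> = vplus (evec a) (evec (k+1-i))}"

end

theory Submission
  imports Defs
begin

lemma neg_pair:
  assumes "A \<noteq> B" "1 \<le> A" "A \<le> n" "1 \<le> B" "B \<le> n" "c = 1 \<or> c = -1" "d = 1 \<or> d = -1"
  shows "(\<lambda>j. (if j = A then c else 0) + (if j = B then d else (0::int))) \<in> neg_roots_B n \<longleftrightarrow>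
     (c=-1\<and>d=-1) \<or> (c=-1\<and>d=1\<and>A<B) \<or> (c=1\<and>d=-1\<and>B<A)" (is "?f \<in> _ \<longleftrightarrow> _")
proof
  assume "?f \<in> neg_roots_B n"
  then obtain \<alpha> where al: "\<alpha> \<in> pos_roots_B n" "?f = vneg \<alpha>" unfolding neg_roots_B_def by auto
  have E: "\<And>j. ?f j = vneg \<alpha> j" using fun_cong[OF al(2)] by blast
  from al(1) show "(c=-1\<and>d=-1) \<or> (c=-1\<and>d=1\<and>A<B) \<or> (c=1\<and>d=-1\<and>B<A)"
    unfolding pos_roots_B_def
  proof (elim UnE CollectE exE conjE)
    fix a b assume h: "\<alpha> = vminus (evec a) (evec b)" "1 \<le> a" "a < b" "b \<le> n"
    have "?f a = vneg \<alpha> a" "?f b = vneg \<alpha> b" "?f A = vneg \<alpha> A" "?f B = vneg \<alpha> B" by (rule E)+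
    then show ?thesis using h assms by (auto simp: vneg_def vminus_def evec_def split: if_splits)
  next
    fix a b assume h: "\<alpha> = vplus (evec a) (evec b)" "1 \<le> a" "a < b" "b \<le> n"
    have "?f a = vneg \<alpha> a" "?f b = vneg \<alpha> b" "?f A = vneg \<alpha> A" "?f B = vneg \<alpha> B" by (rule E)+
    then show ?thesis using h assms by (auto simp: vneg_def vplus_def evec_def split: if_splits)
  next
    fix a assume h: "\<alpha> = evec a" "1 \<le> a" "a \<le> n"
    have "?f a = vneg \<alpha> a" "?f A = vneg \<alpha> A" "?f B = vneg \<alpha> B" by (rule E)+
    then show ?thesis using h assms by (auto simp: vneg_def evec_def split: if_splits)
  qed
next
  assume H: "(c=-1\<and>d=-1) \<or> (c=-1\<and>d=1\<and>A<B) \<or> (c=1\<and>d=-1\<and>B<A)"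
  show "?f \<in> neg_roots_B n"
  proof (cases "c=-1\<and>d=-1")
    case True
    have m: "vplus (evec (min A B)) (evec (max A B)) \<in> pos_roots_B n"
      proof -
      have "1 \<le> min A B" "min A B < max A B" "max A B \<le> n" using assms by auto
      then show ?thesis unfolding pos_roots_B_def by blast
    qed
    have "?f = vneg (vplus (evec (min A B)) (evec (max A B)))"
      using True assms by (auto simp: fun_eq_iff vneg_def vplus_def evec_def min_def max_def)
    then show ?thesis using m unfolding neg_roots_B_def by blast
  next
    case False
    show ?thesis
    proof (cases "c=-1\<and>d=1\<and>A<B")
      case True
      have m: "vminus (evec A) (evec B) \<in> pos_roots_B n"
        unfolding pos_roots_B_def using assms True by auto
      have "?f = vneg (vminus (evec A) (evec B))"
        using True assms by (auto simp: fun_eq_iff vneg_def vminus_def evec_def)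
      then show ?thesis using m unfolding neg_roots_B_def by blast
    next
      case F2: False
      then have T: "c=1\<and>d=-1\<and>B<A" using H False by auto
      have m: "vminus (evec B) (evec A) \<in> pos_roots_B n"
        unfolding pos_roots_B_def using assms T by auto
      have "?f = vneg (vminus (evec B) (evec A))"
        using T assms by (auto simp: fun_eq_iff vneg_def vminus_def evec_def)
      then show ?thesis using m unfolding neg_roots_B_def by blast
    qed
  qed
qed

lemma neg_single:
  assumes "1 \<le> A" "A \<le> n" "c = 1 \<or> c = -1"
  shows "(\<lambda>j. if j = A then c else (0::int)) \<in> neg_roots_B n \<longleftrightarrow> c = -1" (is "?f \<in> _ \<longleftrightarrow> _")
proof
  assume "?f \<in> neg_roots_B n"
  then obtain \<alpha> where al: "\<alpha> \<in> pos_roots_B n" "?f = vneg \<alpha>" unfolding neg_roots_B_def by auto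
  have E: "\<And>j. ?f j = vneg \<alpha> j" using fun_cong[OF al(2)] by blast
  from al(1) show "c = -1"
    unfolding pos_roots_B_def
  proof (elim UnE CollectE exE conjE)
    fix a b assume h: "\<alpha> = vminus (evec a) (evec b)" "1 \<le> a" "a < b" "b \<le> n"
    have "?f a = vneg \<alpha> a" "?f b = vneg \<alpha> b" "?f A = vneg \<alpha> A" by (rule E)+
    then show ?thesis using h assms by (auto simp: vneg_def vminus_def evec_def split: if_splits)
  next
    fix a b assume h: "\<alpha> = vplus (evec a) (evec b)" "1 \<le> a" "a < b" "b \<le> n"
    have "?f a = vneg \<alpha> a" "?f b = vneg \<alpha> b" "?f A = vneg \<alpha> A" by (rule E)+
    then show ?thesis using h assms by (auto simp: vneg_def vplus_def evec_def split: if_splits)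
  next
    fix a assume h: "\<alpha> = evec a" "1 \<le> a" "a \<le> n"
    have "?f a = vneg \<alpha> a" "?f A = vneg \<alpha> A" by (rule E)+
    then show ?thesis using h assms by (auto simp: vneg_def evec_def split: if_splits)
  qed
next
  assume "c = -1"
  moreover have "evec A \<in> pos_roots_B n" unfolding pos_roots_B_def using assms by auto
  moreover have "?f = vneg (evec A)" using \<open>c = -1\<close> by (auto simp: fun_eq_iff vneg_def evec_def)
  ultimately show "?f \<in> neg_roots_B n" unfolding neg_roots_B_def by blast
qed

lemma act_evec:
  assumes "a \<in> {1..n}"
  shows "signed_act n w (evec a) = (\<lambda>j. if j = nat \<bar>w a\<bar> then sgn (w a) else 0)"
  using assms unfolding signed_act_def evec_def
  by (auto simp: fun_eq_iff if_distrib[of "\<lambda>x. x * _"] cong: if_cong)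

lemma act_plus: "signed_act n w (vplus u u') = vplus (signed_act n w u) (signed_act n w u')"
  unfolding signed_act_def vplus_def by (auto simp: fun_eq_iff sum.distrib distrib_right)

lemma act_minus: "signed_act n w (vminus u u') = vminus (signed_act n w u) (signed_act n w u')"
  unfolding signed_act_def vminus_def by (auto simp: fun_eq_iff sum_subtractf left_diff_distrib)

locale W = fixes n :: nat and w :: "nat \<Rightarrow> int"
  assumes W: "\<And>a. a \<in> {1..n} \<Longrightarrow> w a \<noteq> 0 \<and> 1 \<le> nat \<bar>w a\<bar> \<and> nat \<bar>w a\<bar> \<le> n"
  and I: "inj_on (\<lambda>a. nat \<bar>w a\<bar>) {1..n}"
begin

lemma sgn_cases: "a \<in> {1..n} \<Longrightarrow> sgn (w a) = 1 \<or> sgn (w a) = -1"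
  using W[of a] by (auto simp: sgn_if)

lemma inv_minus:
  assumes "1 \<le> a" "a < b" "b \<le> n"
  shows "vminus (evec a) (evec b) \<in> Inv_B n w \<longleftrightarrow>
    (w a < 0 \<and> w b > 0) \<or> (w a < 0 \<and> w b < 0 \<and> w a > w b) \<or> (w a > 0 \<and> w b > 0 \<and> w a > w b)"
proof -
  have a: "a \<in> {1..n}" and b: "b \<in> {1..n}" using assms by auto
  have pos: "vminus (evec a) (evec b) \<in> pos_roots_B n" unfolding pos_roots_B_def using assms by blast
  have ne: "nat \<bar>w a\<bar> \<noteq> nat \<bar>w b\<bar>" using I a b assms(2) unfolding inj_on_def by fastforce
  have act: "signed_act n w (vminus (evec a) (evec b)) =
     (\<lambda>j. (if j = nat \<bar>w a\<bar> then sgn (w a) else 0) + (if j = nat \<bar>w b\<bar> then - sgn (w b) else 0))"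
    unfolding act_minus act_evec[OF a] act_evec[OF b] by (simp add: vminus_def fun_eq_iff)
  have d: "- sgn (w b) = 1 \<or> - sgn (w b) = -1" using sgn_cases[OF b] by auto
  show ?thesis
    unfolding Inv_B_def using pos act neg_pair[OF ne _ _ _ _ sgn_cases[OF a] d] W[OF a] W[OF b]
    by (auto simp: sgn_if split: if_splits)
qed

lemma inv_plus:
  assumes "1 \<le> a" "a < b" "b \<le> n"
  shows "vplus (evec a) (evec b) \<in> Inv_B n w \<longleftrightarrow>
    (w a < 0 \<and> w b < 0) \<or> (w a < 0 \<and> w b > 0 \<and> - w a < w b) \<or> (w a > 0 \<and> w b < 0 \<and> - w b < w a)"
proof -
  have a: "a \<in> {1..n}" and b: "b \<in> {1..n}" using assms by auto
  have pos: "vplus (evec a) (evec b) \<in> pos_roots_B n" unfolding pos_roots_B_def using assms by blast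
  have ne: "nat \<bar>w a\<bar> \<noteq> nat \<bar>w b\<bar>" using I a b assms(2) unfolding inj_on_def by fastforce
  have act: "signed_act n w (vplus (evec a) (evec b)) =
     (\<lambda>j. (if j = nat \<bar>w a\<bar> then sgn (w a) else 0) + (if j = nat \<bar>w b\<bar> then sgn (w b) else 0))"
    unfolding act_plus act_evec[OF a] act_evec[OF b] by (simp add: vplus_def)
  show ?thesis
    unfolding Inv_B_def using pos act neg_pair[OF ne _ _ _ _ sgn_cases[OF a] sgn_cases[OF b]] W[OF a] W[OF b]
    by (auto simp: sgn_if split: if_splits)
qed

lemma inv_e:
  assumes "1 \<le> a" "a \<le> n"
  shows "evec a \<in> Inv_B n w \<longleftrightarrow> w a < 0"
proof -
  have a: "a \<in> {1..n}" using assms by auto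
  have pos: "evec a \<in> pos_roots_B n" unfolding pos_roots_B_def using assms by blast
  show ?thesis
    unfolding Inv_B_def using pos act_evec[OF a, of w] neg_single[where A="nat \<bar>w a\<bar>" and n=n and c="sgn (w a)"] sgn_cases[OF a] W[OF a]
    by (auto simp: sgn_if split: if_splits)
qed

end
lemma card_shift: "card {b \<in> {k<..n}. P (b - k)} = card {l \<in> {1..n-k}. P l}" for k n :: nat
proof -
  have "{b \<in> {k<..n}. P (b - k)} = (\<lambda>l. l + k) ` {l \<in> {1..n-k}. P l}"
  proof (rule set_eqI, rule iffI)
    fix b assume "b \<in> {b \<in> {k<..n}. P (b - k)}"
    then show "b \<in> (\<lambda>l. l + k) ` {l \<in> {1..n-k}. P l}"
      by (intro image_eqI[of _ _ "b - k"]) auto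
  qed auto
  moreover have "inj_on (\<lambda>l. l + k) {l \<in> {1..n-k}. P l}" by (auto simp: inj_on_def)
  ultimately show ?thesis by (simp add: card_image)
qed

theorem lemma3p6:
  fixes n k r :: nat and y z v :: "nat \<Rightarrow> nat"
  assumes "1 \<le> k" and "k < n" and "r \<le> k"
    and "strict_mono_on {1..k-r} y"
    and "strict_mono_on {1..r} z"
    and "strict_mono_on {1..n-k} v"
    and "bij_betw (\<lambda>p. nat \<bar>og_word k r y z v p\<bar>) {1..n} {1..n}"
    and "1 \<le> i" and "i \<le> k"
  shows "lambda1 n k (Inv_B n (og_word k r y z v)) i =
           (if i \<le> r then n + 1 - k + card {l \<in> {1..n-k}. z i < v l}
            else card {l \<in> {1..n-k}. y (k+1-i) > v l})
       \<and> lambda2 k (Inv_B n (og_word k r y z v)) i =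
           (if i \<le> r then card {q \<in> {1..r}. z i < z q} + card {t \<in> {1..k-r}. z i < y t}
            else 0)"
proof -
  define w where "w = og_word k r y z v"
  define p where "p = k + 1 - i"
  have p: "1 \<le> p" "p \<le> k" using assms by (auto simp: p_def)
  have bij: "bij_betw (\<lambda>p. nat \<bar>w p\<bar>) {1..n} {1..n}" using assms(7) by (simp add: w_def)
  interpret W n w
  proof
    fix a :: nat assume a: "a \<in> {1..n}"
    have "nat \<bar>w a\<bar> \<in> {1..n}" using bij_betw_apply[OF bij a] .
    then show "w a \<noteq> 0 \<and> 1 \<le> nat \<bar>w a\<bar> \<and> nat \<bar>w a\<bar> \<le> n" by auto
  next
    show "inj_on (\<lambda>a. nat \<bar>w a\<bar>) {1..n}" using bij_betw_imp_inj_on[OF bij] .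
  qed
  have wy: "\<And>a. a \<le> k - r \<Longrightarrow> w a = int (y a)" by (simp add: w_def og_word_def)
  have wz: "\<And>a. k - r < a \<Longrightarrow> a \<le> k \<Longrightarrow> w a = - int (z (k + 1 - a))" by (simp add: w_def og_word_def)
  have wv: "\<And>a. k < a \<Longrightarrow> w a = int (v (a - k))" by (auto simp: w_def og_word_def)
  have wpos1: "\<And>a. 1 \<le> a \<Longrightarrow> a \<le> k - r \<Longrightarrow> w a > 0"
  proof -
    fix a assume "1 \<le> a" "a \<le> k - r"
    then have "w a \<noteq> 0" using W[of a] assms by auto
    then show "w a > 0" using wy[OF \<open>a \<le> k - r\<close>] by simp
  qed
  have wneg: "\<And>a. k - r < a \<Longrightarrow> a \<le> k \<Longrightarrow> w a < 0"
  proof -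
    fix a assume "k - r < a" "a \<le> k"
    then have "w a \<noteq> 0" using W[of a] assms by auto
    then show "w a < 0" using wz[OF \<open>k - r < a\<close> \<open>a \<le> k\<close>] by simp
  qed
  have wpos2: "\<And>a. k < a \<Longrightarrow> a \<le> n \<Longrightarrow> w a > 0"
  proof -
    fix a assume "k < a" "a \<le> n"
    then have "w a \<noteq> 0" using W[of a] assms by auto
    then show "w a > 0" using wv[OF \<open>k < a\<close>] by simp
  qed

  define f1 where "f1 = (\<lambda>b. vminus (evec p) (evec b))"
  define f2 where "f2 = (\<lambda>b. vplus (evec p) (evec b))"
  define B1 where "B1 = {b \<in> {k<..n}. f1 b \<in> Inv_B n w}"
  define B2 where "B2 = {b \<in> {k<..n}. f2 b \<in> Inv_B n w}"
  define E where "E = {\<alpha>. \<alpha> = evec p \<and> \<alpha> \<in> Inv_B n w}"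
  have S1eq: "{\<alpha> \<in> Inv_B n w. (\<exists>b. k < b \<and> b \<le> n \<and> (\<alpha> = vminus (evec p) (evec b) \<or> \<alpha> = vplus (evec p) (evec b))) \<or> \<alpha> = evec p}
     = f1 ` B1 \<union> f2 ` B2 \<union> E"
    unfolding B1_def B2_def E_def f1_def f2_def by auto
  have ev1: "\<And>b. b \<noteq> p \<Longrightarrow> f1 b b = -1" by (simp add: f1_def vminus_def evec_def)
  have ev2: "\<And>b. b \<noteq> p \<Longrightarrow> f2 b b = 1" by (simp add: f2_def vplus_def evec_def)
  have ev1': "\<And>b c. c \<noteq> p \<Longrightarrow> c \<noteq> b \<Longrightarrow> f1 b c = 0" by (simp add: f1_def vminus_def evec_def)
  have ev2': "\<And>b c. c \<noteq> p \<Longrightarrow> c \<noteq> b \<Longrightarrow> f2 b c = 0" by (simp add: f2_def vplus_def evec_def)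
  have inj1: "inj_on f1 B1"
  proof (rule inj_onI)
    fix x y assume "x \<in> B1" "y \<in> B1" "f1 x = f1 y"
    then have xy: "x \<noteq> p" "y \<noteq> p" using p by (auto simp: B1_def)
    then have "f1 y x = -1" using ev1 \<open>f1 x = f1 y\<close> by metis
    then show "x = y" using ev1' xy by force
  qed
  have inj2: "inj_on f2 B2"
  proof (rule inj_onI)
    fix x y assume "x \<in> B2" "y \<in> B2" "f2 x = f2 y"
    then have xy: "x \<noteq> p" "y \<noteq> p" using p by (auto simp: B2_def)
    then have "f2 y x = 1" using ev2 \<open>f2 x = f2 y\<close> by metis
    then show "x = y" using ev2' xy by force
  qed
  have d12: "f1 ` B1 \<inter> f2 ` B2 = {}"
  proof (rule ccontr)
    assume "f1 ` B1 \<inter> f2 ` B2 \<noteq> {}"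
    then obtain x y where "x \<in> B1" "y \<in> B2" "f1 x = f2 y" by blast
    then have xy: "x \<noteq> p" "y \<noteq> p" using p by (auto simp: B1_def B2_def)
    then have "f2 y x = -1" using ev1 \<open>f1 x = f2 y\<close> by metis
    then show False using ev2 ev2' xy by (cases "x = y") force+
  qed
  have d3: "(f1 ` B1 \<union> f2 ` B2) \<inter> E = {}"
  proof (rule ccontr)
    assume "(f1 ` B1 \<union> f2 ` B2) \<inter> E \<noteq> {}"
    then obtain x where x: "x \<in> B1 \<union> B2" "f1 x = evec p \<or> f2 x = evec p" unfolding E_def by blast
    then have "x \<noteq> p" using p by (auto simp: B1_def B2_def)
    then show False using x ev1 ev2 by (auto simp: evec_def dest!: fun_cong[of _ _ x])
  qed
  have fin: "finite B1" "finite B2" "finite E" unfolding B1_def B2_def E_def by auto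
  have card1: "lambda1 n k (Inv_B n w) i = card B1 + card B2 + card E"
    unfolding lambda1_def p_def[symmetric] S1eq
    using fin d12 d3 inj1 inj2 by (simp add: card_Un_disjoint card_image)

  define f3 where "f3 = (\<lambda>a. vplus (evec a) (evec p))"
  define A where "A = {a \<in> {1..<p}. f3 a \<in> Inv_B n w}"
  have S2eq: "{\<alpha> \<in> Inv_B n w. \<exists>a. 1 \<le> a \<and> a < p \<and> \<alpha> = vplus (evec a) (evec p)} = f3 ` A"
    unfolding A_def f3_def by auto
  have inj3: "inj_on f3 A"
  proof (rule inj_onI)
    fix x y assume "x \<in> A" "y \<in> A" "f3 x = f3 y"
    then have xy: "x \<noteq> p" "y \<noteq> p" by (auto simp: A_def)
    have "f3 x x = 1" using xy by (simp add: f3_def vplus_def evec_def)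
    then have "f3 y x = 1" using \<open>f3 x = f3 y\<close> by metis
    then show "x = y" using xy by (auto simp: f3_def vplus_def evec_def split: if_splits)
  qed
  have card2: "lambda2 k (Inv_B n w) i = card A"
    unfolding lambda2_def p_def[symmetric] S2eq using inj3 by (simp add: card_image)

  show ?thesis
  proof (cases "i \<le> r")
    case True
    have pz: "k - r < p" using True assms p_def by auto
    have wp: "w p = - int (z i)" using wz[OF pz p(2)] p_def assms by simp
    have eB1: "B1 = {k<..n}"
      unfolding B1_def f1_def using inv_minus[of p] p wneg[OF pz p(2)] wpos2 by auto
    moreover have "B2 = {b \<in> {k<..n}. z i < v (b - k)}"
      unfolding B2_def f2_def using inv_plus[of p] p wneg[OF pz p(2)] wpos2 wp wv by auto
    then have cB2: "card B2 = card {l \<in> {1..n-k}. z i < v l}" using card_shift[of k n "\<lambda>l. z i < v l"] by simp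
    moreover have eE: "E = {evec p}"
      unfolding E_def using inv_e[of p] p wneg[OF pz p(2)] assms by auto
    moreover have eA: "A = {a \<in> {1..k-r}. z i < y a} \<union> {k-r<..<p}"
    proof (rule set_eqI)
      fix a
      have zi: "w p < 0" using wneg[OF pz p(2)] .
      have pn: "p \<le> n" using p assms(2) by simp
      show "a \<in> A \<longleftrightarrow> a \<in> {a \<in> {1..k-r}. z i < y a} \<union> {k-r<..<p}"
      proof (cases "1 \<le> a \<and> a < p")
        case T: True
        show ?thesis
        proof (cases "a \<le> k - r")
          case True
          have "w a > 0" using wpos1[of a] T True by simp
          moreover have "w a = int (y a)" using wy[OF True] .
          moreover have "f3 a \<in> Inv_B n w \<longleftrightarrow> (w a < 0 \<and> w p < 0) \<or> (w a < 0 \<and> w p > 0 \<and> - w a < w p) \<or> (w a > 0 \<and> w p < 0 \<and> - w p < w a)"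
            unfolding f3_def using inv_plus[of a p] T pn by simp
          ultimately have "a \<in> A \<longleftrightarrow> z i < y a" unfolding A_def using T zi wp by simp
          then show ?thesis using T True by simp
        next
          case False
          have "w a < 0" using wneg[of a] T p False by simp
          moreover have "f3 a \<in> Inv_B n w \<longleftrightarrow> (w a < 0 \<and> w p < 0) \<or> (w a < 0 \<and> w p > 0 \<and> - w a < w p) \<or> (w a > 0 \<and> w p < 0 \<and> - w p < w a)"
            unfolding f3_def using inv_plus[of a p] T pn by simp
          ultimately have "a \<in> A" unfolding A_def using T zi by simp
          then show ?thesis using T False by simp
        qed
      next
        case False
        then show ?thesis unfolding A_def using pz by auto
      qed
    qed
    moreover have cQ: "card {q \<in> {1..r}. z i < z q} = r - i"
    proof -
      have "{q \<in> {1..r}. z i < z q} = {i<..r}"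
        using strict_mono_on_less[OF assms(5), of i] True assms(8) by auto
      then show ?thesis by simp
    qed
    moreover have cU: "card ({a \<in> {1..k-r}. z i < y a} \<union> {k-r<..<p}) = card {a \<in> {1..k-r}. z i < y a} + (r - i)"
    proof -
      have c: "card {k-r<..<p} = r - i" using p_def True assms by simp
      have "{a \<in> {1..k-r}. z i < y a} \<inter> {k-r<..<p} = {}" by auto
      then show ?thesis using c by (simp add: card_Un_disjoint)
    qed
    have l1: "card B1 + card B2 + card E = n + 1 - k + card {l \<in> {1..n-k}. z i < v l}"
      using eB1 cB2 eE assms(2) by simp
    have l2: "card A = card {q \<in> {1..r}. z i < z q} + card {t \<in> {1..k-r}. z i < y t}"
      using eA cU cQ by simp
    show ?thesis unfolding w_def[symmetric] card1 card2 using l1 l2 True by simp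
  next
    case False
    have py: "p \<le> k - r" using False assms p_def by auto
    have wp: "w p = int (y p)" using wy[OF py] .
    have "B1 = {b \<in> {k<..n}. v (b - k) < y p}"
      unfolding B1_def f1_def using inv_minus[of p] p wpos1[OF p(1) py] wpos2 wp wv by auto
    then have "card B1 = card {l \<in> {1..n-k}. v l < y p}" using card_shift[of k n "\<lambda>l. v l < y p"] by simp
    moreover have "B2 = {}"
    proof -
      have "\<forall>b\<in>{k<..n}. f2 b \<notin> Inv_B n w"
      proof
        fix b assume b: "b \<in> {k<..n}"
        then have "w b > 0" using wpos2 by auto
        then show "f2 b \<notin> Inv_B n w" unfolding f2_def using inv_plus[of p b] p b wpos1[OF p(1) py] by auto
      qed
      then show ?thesis unfolding B2_def by auto
    qed
    moreover have "E = {}"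
      unfolding E_def using inv_e[of p] p wpos1[OF p(1) py] assms by auto
    moreover have "A = {}"
    proof -
      have pn: "p \<le> n" using p assms(2) by simp
      have wp0: "w p > 0" using wpos1[OF p(1) py] .
      have "\<forall>a\<in>{1..<p}. f3 a \<notin> Inv_B n w"
      proof
        fix a assume a: "a \<in> {1..<p}"
        then have "w a > 0" using wpos1[of a] py by simp
        moreover have "f3 a \<in> Inv_B n w \<longleftrightarrow> (w a < 0 \<and> w p < 0) \<or> (w a < 0 \<and> w p > 0 \<and> - w a < w p) \<or> (w a > 0 \<and> w p < 0 \<and> - w p < w a)"
          unfolding f3_def using inv_plus[of a p] a pn by simp
        ultimately show "f3 a \<notin> Inv_B n w" using wp0 by simp
      qed
      then show ?thesis unfolding A_def by auto
    qed
    ultimately have "card B1 + card B2 + card E = card {l \<in> {1..n-k}. v l < y (k+1-i)}" "card A = 0"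
      using p_def by simp_all
    then show ?thesis unfolding w_def[symmetric] card1 card2 using False by simp
  qed
qed

end
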